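(* Let $F$ be a hitting clause-set and $v$ a variable. Then $\mathrm{DP}_v(F)$ is a hitting clause-set.
   Context: Literals are variables $v$ and complements $\overline{v}$; a clause is a finite set of literals with no complementary pair; a clause-set is a finite set of clauses; for a set of literals $D$, $\overline{D}=\{\overline{y}:y\in D\}$. A clause-set $F$ is hitting if for all distinct $C,D\in F$ we have $C\cap\overline{D}\neq\emptyset$. $\mathrm{DP}_v(F) := \{C \in F : v \notin \mathrm{var}(C)\} \cup \{(C \cup D)\setminus\{v,\overline{v}\} : C, D \in F,\ C \cap \overline{D} = \{v\}\}$, where $\mathrm{var}(C)$ is the set of variables underlying the literals of $C$. *)

theory Defs
  imports Main
begin

datatype 'v lit = Pos 'v | Neg 'v

fun comp :: "'v lit \<Rightarrow> 'v lit" where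
  "comp (Pos v) = Neg v"
| "comp (Neg v) = Pos v"

fun var_of :: "'v lit \<Rightarrow> 'v" where
  "var_of (Pos v) = v"
| "var_of (Neg v) = v"

definition comp_set :: "'v lit set \<Rightarrow> 'v lit set" where
  "comp_set D = comp ` D"

definition vars :: "'v lit set \<Rightarrow> 'v set" where
  "vars C = var_of ` C"

definition clause :: "'v lit set \<Rightarrow> bool" where
  "clause C \<longleftrightarrow> finite C \<and> C \<inter> comp_set C = {}"

definition clause_set :: "'v lit set set \<Rightarrow> bool" where
  "clause_set F \<longleftrightarrow> finite F \<and> (\<forall>C\<in>F. clause C)"

definition hitting :: "'v lit set set \<Rightarrow> bool" where
  "hitting F \<longleftrightarrow> (\<forall>C\<in>F. \<forall>D\<in>F. C \<noteq> D \<longrightarrow> C \<inter> comp_set D \<noteq> {})"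

definition DP :: "'v \<Rightarrow> 'v lit set set \<Rightarrow> 'v lit set set" where
  "DP v F = {C \<in> F. v \<notin> vars C} \<union>
     {(C \<union> D) - {Pos v, Neg v} | C D. C \<in> F \<and> D \<in> F \<and> C \<inter> comp_set D = {Pos v}}"

end

theory Submission
  imports Defs
begin

lemma comp_comp[simp]: "comp (comp x) = x" by (cases x) auto
lemma comp_neq[simp]: "comp x \<noteq> x" by (cases x) auto
lemma var_comp[simp]: "var_of (comp x) = var_of x" by (cases x) auto
lemma in_comp_set: "x \<in> comp_set D \<longleftrightarrow> comp x \<in> D"
  unfolding comp_set_def by (metis comp_comp image_iff)

lemma clash: "C \<inter> comp_set D \<noteq> {} \<longleftrightarrow> (\<exists>x. x \<in> C \<and> comp x \<in> D)"
  by (auto simp: in_comp_set)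

lemma clash_sym: "C \<inter> comp_set D \<noteq> {} \<Longrightarrow> D \<inter> comp_set C \<noteq> {}"
  unfolding clash by (metis comp_comp)

lemma clause_nocomp: "clause C \<Longrightarrow> x \<in> C \<Longrightarrow> comp x \<notin> C"
  unfolding clause_def by (auto simp: in_comp_set)

lemma resolvent_clause:
  assumes "clause C" "clause D" "C \<inter> comp_set D = {Pos v}"
  shows "clause ((C \<union> D) - {Pos v, Neg v})"
proof -
  have A: "y \<in> C \<Longrightarrow> comp y \<in> D \<Longrightarrow> y = Pos v" for y
    using assms(3) in_comp_set[of y D] by blast
  have nC: "y \<in> C \<Longrightarrow> comp y \<notin> C" for y using clause_nocomp[OF assms(1)] by blast
  have nD: "y \<in> D \<Longrightarrow> comp y \<notin> D" for y using clause_nocomp[OF assms(2)] by blast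
  have "\<not> (x \<in> (C \<union> D) - {Pos v, Neg v} \<and> comp x \<in> (C \<union> D) - {Pos v, Neg v})" for x
  proof
    assume h: "x \<in> (C \<union> D) - {Pos v, Neg v} \<and> comp x \<in> (C \<union> D) - {Pos v, Neg v}"
    then have h1: "x \<in> C \<or> x \<in> D" "comp x \<in> C \<or> comp x \<in> D" "x \<noteq> Pos v" "x \<noteq> Neg v" by auto
    have "comp x \<noteq> Pos v" using h1(4) by (cases x) auto
    then show False using h1 A[of x] A[of "comp x", unfolded comp_comp] nC[of x] nD[of x] by blast
  qed
  moreover have "finite ((C \<union> D) - {Pos v, Neg v})" using assms unfolding clause_def by auto
  ultimately show ?thesis unfolding clause_def using in_comp_set by blast
qed
lemma t1: "v \<notin> vars A \<Longrightarrow> x \<in> A \<Longrightarrow> x \<noteq> Pos v \<and> x \<noteq> Neg v"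
  unfolding vars_def by force
lemma t2: "hitting F \<Longrightarrow> C \<in> F \<Longrightarrow> D \<in> F \<Longrightarrow> C \<noteq> D \<Longrightarrow> \<exists>x. x \<in> C \<and> comp x \<in> D"
    unfolding hitting_def clash by blast
lemma t3: "{(C \<union> D) - {Pos v, Neg v} | C D. C \<in> F \<and> D \<in> F \<and> C \<inter> comp_set D = {Pos v}} \<subseteq> (\<lambda>(C,D). (C \<union> D) - {Pos v, Neg v}) ` (F \<times> F)" by auto
lemma t4:  "C \<inter> comp_set D = {Pos v} \<Longrightarrow> Pos v \<in> C \<and> Neg v \<in> D"
    using  in_comp_set[of "Pos v" D] by auto
lemma DP_cases:
  assumes "A \<in> DP v F"
  obtains "A \<in> F" "v \<notin> vars A"
  | C D where "A = (C \<union> D) - {Pos v, Neg v}" "C \<in> F" "D \<in> F" "C \<inter> comp_set D = {Pos v}"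
  using assms unfolding DP_def by blast

lemma DP_clause_set: assumes "clause_set F" shows "clause_set (DP v F)"
proof -
  have fin: "finite F" and cl: "\<And>C. C \<in> F \<Longrightarrow> clause C" using assms unfolding clause_set_def by auto
  have "finite {(C \<union> D) - {Pos v, Neg v} | C D. C \<in> F \<and> D \<in> F \<and> C \<inter> comp_set D = {Pos v}}"
    by (rule finite_subset[OF t3 finite_imageI[OF finite_cartesian_product[OF fin fin]]])
  hence f: "finite (DP v F)" unfolding DP_def using fin by simp
  have "clause A" if "A \<in> DP v F" for A
    using that
  proof (cases rule: DP_cases)
    case 1 then show ?thesis using cl by blast
  next
    case (2 C D) then show ?thesis using cl resolvent_clause by metis
  qed
  with f show ?thesis unfolding clause_set_def by blast
qed
lemma comp_Pos: "comp x = Pos v \<longleftrightarrow> x = Neg v" by (cases x) auto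
lemma comp_Neg: "comp x = Neg v \<longleftrightarrow> x = Pos v" by (cases x) auto

lemma mixed:
  assumes cl: "clause_set F" and h: "hitting F"
    and "A \<in> F" "v \<notin> vars A" "C \<in> F" "D \<in> F" "C \<inter> comp_set D = {Pos v}"
  shows "\<exists>x. x \<in> A \<and> comp x \<in> (C \<union> D) - {Pos v, Neg v}"
proof -
  have "Pos v \<in> C" using t4[OF assms(7)] by blast
  moreover have "Pos v \<notin> A" using t1[OF assms(4)] by blast
  ultimately have "A \<noteq> C" by blast
  then obtain x where x: "x \<in> A" "comp x \<in> C" using t2[OF h] assms by blast
  have "x \<noteq> Pos v" "x \<noteq> Neg v" using t1[OF assms(4) x(1)] by auto
  hence "comp x \<noteq> Pos v" "comp x \<noteq> Neg v" by (simp_all add: comp_Pos comp_Neg)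
  with x show ?thesis by blast
qed

lemma key:
  assumes cl: "clause_set F" and h: "hitting F"
    and A: "A \<in> DP v F" and B: "B \<in> DP v F" and ne: "A \<noteq> B"
  shows "\<exists>x. x \<in> A \<and> comp x \<in> B"
  using A
proof (cases rule: DP_cases)
  case TA: 1
  show ?thesis using B
  proof (cases rule: DP_cases)
    case 1 then show ?thesis using TA t2[OF h] ne by blast
  next
    case (2 C D) then show ?thesis using mixed[OF cl h TA(1) TA(2)] by blast
  qed
next
  case A1: (2 C1 D1)
  have cF: "\<And>C. C \<in> F \<Longrightarrow> clause C" using cl unfolding clause_set_def by blast
  show ?thesis using B
  proof (cases rule: DP_cases)
    case 1
    then obtain y where "y \<in> B" "comp y \<in> A" using mixed[OF cl h _ _ A1(2,3,4)] A1(1) by blast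
    then show ?thesis by (intro exI[of _ "comp y"]) simp
  next
    case B2: (2 C2 D2)
    have pv: "Pos v \<in> C1" "Neg v \<in> D1" "Pos v \<in> C2" "Neg v \<in> D2"
      using t4[OF A1(4)] t4[OF B2(4)] by auto
    show ?thesis
    proof (cases "C1 = C2")
      case False
      then obtain x where x: "x \<in> C1" "comp x \<in> C2" using t2[OF h] A1 B2 by blast
      have "x \<noteq> Pos v" using x pv clause_nocomp[OF cF[OF B2(2)], of "Pos v"] by auto
      moreover have "x \<noteq> Neg v" using x pv clause_nocomp[OF cF[OF A1(2)], of "Pos v"] by auto
      ultimately have "comp x \<noteq> Pos v" "comp x \<noteq> Neg v" by (simp_all add: comp_Pos comp_Neg)
      with \<open>x \<noteq> Pos v\<close> \<open>x \<noteq> Neg v\<close> x A1(1) B2(1) show ?thesis by blast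
    next
      case True
      then have "D1 \<noteq> D2" using ne A1(1) B2(1) by blast
      then obtain x where x: "x \<in> D1" "comp x \<in> D2" using t2[OF h] A1 B2 by blast
      have "x \<noteq> Pos v" using x pv clause_nocomp[OF cF[OF A1(3)], of "Neg v"] by auto
      moreover have "x \<noteq> Neg v" using x pv clause_nocomp[OF cF[OF B2(3)], of "Neg v"] by auto
      ultimately have "comp x \<noteq> Pos v" "comp x \<noteq> Neg v" by (simp_all add: comp_Pos comp_Neg)
      with \<open>x \<noteq> Pos v\<close> \<open>x \<noteq> Neg v\<close> x A1(1) B2(1) show ?thesis by blast
    qed
  qed
qed

theorem lemma4:
  fixes F :: "'v lit set set" and v :: 'v
  assumes "clause_set F" and "hitting F"
  shows "clause_set (DP v F) \<and> hitting (DP v F)"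
proof
  show "clause_set (DP v F)" by (rule DP_clause_set[OF assms(1)])
  show "hitting (DP v F)" unfolding hitting_def
  proof (intro ballI impI)
    fix C D assume "C \<in> DP v F" "D \<in> DP v F" "C \<noteq> D"
    then show "C \<inter> comp_set D \<noteq> {}" unfolding clash using key[OF assms] by blast
  qed
qed
end
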